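(* Let $\mathcal{W}$ be a set and let $(d_\epsilon)_{\epsilon\ge0}$ be a family of functions $d_\epsilon:\mathcal{W}\times\mathcal{W}\to\mathbb{R}$ such that for each fixed $x,y\in\mathcal{W}$ the map $\epsilon\mapsto d_\epsilon(x,y)$ is right continuous and weakly decreasing, and each $d_\epsilon$ is symmetric and satisfies the triangle inequality. For $k>0$ define $d^k(x,y)=\inf\{\epsilon\ge0:d_\epsilon(x,y)\le k\epsilon\}$. If $y,\tilde y\in\mathcal{W}$ and there exists $\delta>0$ with $d_\delta(y,\tilde y)=0$, then for every $x\in\mathcal{W}$, \[ |d^k(x,y)-d^k(x,\tilde y)|\le\delta. \] *)

theory Defs
  imports Complex_Main
begin

text \<open>The family (d_eps)_{eps >= 0} is modelled as d :: real => 'a => 'a => real,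
  only used at eps >= 0. d^k(x,y) = inf {eps >= 0. d_eps(x,y) <= k eps}.\<close>

definition dk :: "(real \<Rightarrow> 'a \<Rightarrow> 'a \<Rightarrow> real) \<Rightarrow> real \<Rightarrow> 'a \<Rightarrow> 'a \<Rightarrow> real" where
  "dk d k x y = Inf {e. 0 \<le> e \<and> d e x y \<le> k * e}"

end

theory Submission
  imports Defs
begin

lemma dk_shift:
  fixes d :: "real \<Rightarrow> 'a \<Rightarrow> 'a \<Rightarrow> real" and k \<delta> :: real
  assumes decr: "\<And>x y a b. x \<in> W \<Longrightarrow> y \<in> W \<Longrightarrow> 0 \<le> a \<Longrightarrow> a \<le> b \<Longrightarrow> d b x y \<le> d a x y"
    and tri: "\<And>x y z e. x \<in> W \<Longrightarrow> y \<in> W \<Longrightarrow> z \<in> W \<Longrightarrow> 0 \<le> e \<Longrightarrow>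
                d e x z \<le> d e x y + d e y z"
    and sym: "\<And>x y e. x \<in> W \<Longrightarrow> y \<in> W \<Longrightarrow> 0 \<le> e \<Longrightarrow> d e x y = d e y x"
    and k: "k > 0"
    and yW: "y \<in> W" and y'W: "y' \<in> W"
    and \<delta>: "\<delta> > 0" and d\<delta>: "d \<delta> y y' = 0"
    and xW: "x \<in> W"
  shows "dk d k x y' \<le> dk d k x y + \<delta>"
proof -
  let ?S = "{e. 0 \<le> e \<and> d e x y \<le> k * e}"
  let ?T = "{e. 0 \<le> e \<and> d e x y' \<le> k * e}"
  have d0: "d e x y \<ge> 0" if "0 \<le> e" for e
  proof -
    have "d e x x \<le> d e x x + d e x x" using tri[OF xW xW xW that] .
    hence "d e x x \<ge> 0" by simp
    moreover have "d e x x \<le> d e x y + d e y x" using tri[OF xW yW xW that] .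
    moreover have "d e y x = d e x y" using sym[OF xW yW that] by simp
    ultimately show ?thesis by linarith
  qed
  have ne: "?S \<noteq> {}"
  proof -
    let ?e = "d 0 x y / k"
    have "?e \<ge> 0" using d0[of 0] k by simp
    moreover have "d ?e x y \<le> d 0 x y" using decr[OF xW yW, of 0 ?e] \<open>?e \<ge> 0\<close> by simp
    moreover have "k * ?e = d 0 x y" using k by simp
    ultimately have "?e \<in> ?S" by simp
    thus ?thesis by blast
  qed
  have bT: "bdd_below ?T" by (rule bdd_belowI[of _ 0]) simp
  have "Inf ?T - \<delta> \<le> e" if "e \<in> ?S" for e
  proof -
    have e0: "0 \<le> e" and ek: "d e x y \<le> k * e" using that by auto
    have "d (e + \<delta>) x y' \<le> d (e + \<delta>) x y + d (e + \<delta>) y y'"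
      using tri[OF xW yW y'W] e0 \<delta> by simp
    also have "d (e + \<delta>) x y \<le> d e x y" using decr[OF xW yW e0] \<delta> by simp
    also have "d (e + \<delta>) y y' \<le> d \<delta> y y'" using decr[OF yW y'W, of \<delta> "e+\<delta>"] \<delta> e0 by simp
    finally have "d (e + \<delta>) x y' \<le> k * (e + \<delta>)" using d\<delta> ek mult_pos_pos[OF k \<delta>]
      by (simp add: distrib_left)
    hence "e + \<delta> \<in> ?T" using e0 \<delta> by simp
    hence "Inf ?T \<le> e + \<delta>" using bT by (rule cInf_lower)
    thus ?thesis by simp
  qed
  hence "Inf ?T - \<delta> \<le> Inf ?S" using ne by (intro cInf_greatest) auto
  thus ?thesis unfolding dk_def by simp
qed

theorem theorem4p10:
  fixes W :: "'a set" and d :: "real \<Rightarrow> 'a \<Rightarrow> 'a \<Rightarrow> real" and k \<delta> :: real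
    and x y y' :: 'a
  assumes rcont: "\<And>x y e. x \<in> W \<Longrightarrow> y \<in> W \<Longrightarrow> 0 \<le> e \<Longrightarrow>
                    continuous (at_right e) (\<lambda>t. d t x y)"
    and decr: "\<And>x y a b. x \<in> W \<Longrightarrow> y \<in> W \<Longrightarrow> 0 \<le> a \<Longrightarrow> a \<le> b \<Longrightarrow> d b x y \<le> d a x y"
    and sym: "\<And>x y e. x \<in> W \<Longrightarrow> y \<in> W \<Longrightarrow> 0 \<le> e \<Longrightarrow> d e x y = d e y x"
    and tri: "\<And>x y z e. x \<in> W \<Longrightarrow> y \<in> W \<Longrightarrow> z \<in> W \<Longrightarrow> 0 \<le> e \<Longrightarrow>
                d e x z \<le> d e x y + d e y z"
    and k: "k > 0"
    and yW: "y \<in> W" and y'W: "y' \<in> W"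
    and \<delta>: "\<delta> > 0" and d\<delta>: "d \<delta> y y' = 0"
    and xW: "x \<in> W"
  shows "\<bar>dk d k x y - dk d k x y'\<bar> \<le> \<delta>"
proof -
  have d\<delta>': "d \<delta> y' y = 0" using sym[OF yW y'W, of \<delta>] \<delta> d\<delta> by simp
  have 1: "dk d k x y' \<le> dk d k x y + \<delta>"
    by (rule dk_shift[where W=W and d=d, OF decr tri sym k yW y'W \<delta> d\<delta> xW])
  have 2: "dk d k x y \<le> dk d k x y' + \<delta>"
    by (rule dk_shift[where W=W and d=d, OF decr tri sym k y'W yW \<delta> d\<delta>' xW])
  show ?thesis using 1 2 by linarith
qed

end
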